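(* Let $\mathcal H$ be a cycle-reset SHS and let $L^{\mathsf{SR}}=\{(\ell,\ell')\in L^2:$ there is at least one edge from $\ell$ to $\ell'$ and every edge $(\ell,a,\ell')\in E$ is strongly reset$\}$. Then for every initial distribution $\nu$ on $S_{\mathcal H}$, $$\mathbb P^{\mathcal T_{\mathcal H}}_\nu\Big(\bigvee_{(\ell,\ell')\in L^{\mathsf{SR}}}\mathbf{GF}(\ell\wedge\mathbf X\ell')\Big)=1,$$ where $\mathbf{GF}(\ell\wedge\mathbf X\ell')$ is the set of runs $s_0s_1\ldots$ such that for infinitely many $k$, $s_k\in\{\ell\}\times\mathbb R^n$ and $s_{k+1}\in\{\ell'\}\times\mathbb R^n$.
   Context: Stochastic hybrid system (SHS) with $n$ variables: finite set $L$ of locations; finite set $E$ of edges $e=(\ell,a,\ell')$; invariants, flows $\gamma_\ell$, guards $\mathcal G(e)$ and reset maps $\mathcal R_e$; states $S_{\mathcal H}=L\times\mathbb R^n$. Probabilistic data: delay distributions $\mu_s$ on $\mathbb R^+$, edge distributions $w_{s'}$ over enabled edges, reset distributions $\eta_e(\mathbf v)$ on $\mathbb R^n$. The STS $\mathcal T_{\mathcal H}$ has kernel $\kappa((\ell,\mathbf v),\{\ell'\}\times D)=\int\sum_{e=(\ell,a,\ell')}w_{s+\tau}(e)\,\eta_e(\gamma_\ell(\mathbf v,\tau))(D)\,d\mu_s(\tau)$ where $s=(\ell,\mathbf v)$, $s+\tau=(\ell,\gamma_\ell(\mathbf v,\tau))$; in particular each step of a run follows an edge of $E$. An edge $e$ is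 strongly reset if $\eta_e(\mathbf v)$ is independent of $\mathbf v$. $\mathcal H$ is cycle-reset if every cycle of the directed graph on $L$ with an arc $\ell\to\ell'$ whenever some edge from $\ell$ to $\ell'$ exists contains an arc $\ell\to\ell'$ such that all edges from $\ell$ to $\ell'$ are strongly reset. $\mathbb P^{\mathcal T_{\mathcal H}}_\nu$ is the induced probability measure on runs. *)

theory Defs
  imports "HOL-Probability.Probability"
begin

type_synonym ('l, 'a) edge = "'l \<times> 'a \<times> 'l"
type_synonym ('l, 'n) state = "'l \<times> (real ^ 'n)"

definition src :: "('l, 'a) edge \<Rightarrow> 'l" where "src e = fst e"
definition tgt :: "('l, 'a) edge \<Rightarrow> 'l" where "tgt e = snd (snd e)"

definition state_measure :: "('l, 'n::finite) state measure" where
  "state_measure = count_space UNIV \<Otimes>\<^sub>M borel"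

definition enabled :: "('l, 'a) edge set \<Rightarrow> (('l, 'a) edge \<Rightarrow> (real ^ 'n) set)
    \<Rightarrow> ('l, 'n) state \<Rightarrow> ('l, 'a) edge set" where
  "enabled E G s = {e \<in> E. src e = fst s \<and> snd s \<in> G e}"

text \<open>Standing assumptions on the (probabilistic) data of an SHS.
  gamma: flows, G: guards, R: reset maps, mu: delay distributions,
  w: edge distributions, eta: reset distributions.\<close>
definition is_SHS ::
  "('l, 'a) edge set \<Rightarrow> ('l \<Rightarrow> real ^ 'n \<Rightarrow> real \<Rightarrow> real ^ 'n)
   \<Rightarrow> (('l, 'a) edge \<Rightarrow> (real ^ 'n) set) \<Rightarrow> (('l, 'a) edge \<Rightarrow> real ^ 'n \<Rightarrow> (real ^ 'n) set)
   \<Rightarrow> (('l, 'n) state \<Rightarrow> real measure) \<Rightarrow> (('l, 'n) state \<Rightarrow> ('l, 'a) edge \<Rightarrow> real)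
   \<Rightarrow> (('l, 'a) edge \<Rightarrow> real ^ 'n \<Rightarrow> (real ^ 'n) measure) \<Rightarrow> bool" where
  "is_SHS E \<gamma> G R \<mu> w \<eta> \<longleftrightarrow>
     finite E \<and>
     (\<forall>s. prob_space (\<mu> s) \<and> sets (\<mu> s) = sets borel \<and> (AE \<tau> in \<mu> s. 0 \<le> \<tau>)) \<and>
     (\<forall>s e. 0 \<le> w s e) \<and>
     (\<forall>s e. w s e \<noteq> 0 \<longrightarrow> e \<in> enabled E G s) \<and>
     (\<forall>s. enabled E G s \<noteq> {} \<longrightarrow> (\<Sum>e\<in>enabled E G s. w s e) = 1) \<and>
     (\<forall>e v. prob_space (\<eta> e v) \<and> sets (\<eta> e v) = sets borel \<and> (AE x in \<eta> e v. x \<in> R e v))"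

definition shs_kernel_val ::
  "('l, 'a) edge set \<Rightarrow> ('l \<Rightarrow> real ^ 'n \<Rightarrow> real \<Rightarrow> real ^ 'n)
   \<Rightarrow> (('l, 'n) state \<Rightarrow> real measure) \<Rightarrow> (('l, 'n) state \<Rightarrow> ('l, 'a) edge \<Rightarrow> real)
   \<Rightarrow> (('l, 'a) edge \<Rightarrow> real ^ 'n \<Rightarrow> (real ^ 'n) measure)
   \<Rightarrow> ('l, 'n) state \<Rightarrow> 'l \<Rightarrow> (real ^ 'n) set \<Rightarrow> real" where
  "shs_kernel_val E \<gamma> \<mu> w \<eta> s l' D =
     (\<integral>\<tau>. (\<Sum>e\<in>{e \<in> E. src e = fst s \<and> tgt e = l'}.
              w (fst s, \<gamma> (fst s) (snd s) \<tau>) e * measure (\<eta> e (\<gamma> (fst s) (snd s) \<tau>)) D) \<partial>\<mu> s)"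

definition strongly_reset :: "(('l, 'a) edge \<Rightarrow> real ^ 'n \<Rightarrow> (real ^ 'n) measure) \<Rightarrow> ('l, 'a) edge \<Rightarrow> bool" where
  "strongly_reset \<eta> e \<longleftrightarrow> (\<forall>v v'. \<eta> e v = \<eta> e v')"

definition loc_arc :: "('l, 'a) edge set \<Rightarrow> 'l \<Rightarrow> 'l \<Rightarrow> bool" where
  "loc_arc E l l' \<longleftrightarrow> (\<exists>e\<in>E. src e = l \<and> tgt e = l')"

definition SR_pairs :: "('l, 'a) edge set \<Rightarrow> (('l, 'a) edge \<Rightarrow> real ^ 'n \<Rightarrow> (real ^ 'n) measure) \<Rightarrow> ('l \<times> 'l) set" where
  "SR_pairs E \<eta> = {(l, l'). loc_arc E l l' \<and> (\<forall>e\<in>E. src e = l \<and> tgt e = l' \<longrightarrow> strongly_reset \<eta> e)}"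

definition cycle_reset :: "('l, 'a) edge set \<Rightarrow> (('l, 'a) edge \<Rightarrow> real ^ 'n \<Rightarrow> (real ^ 'n) measure) \<Rightarrow> bool" where
  "cycle_reset E \<eta> \<longleftrightarrow>
     (\<forall>xs. xs \<noteq> [] \<and> (\<forall>i<length xs. loc_arc E (xs ! i) (xs ! (Suc i mod length xs))) \<longrightarrow>
        (\<exists>i<length xs. (xs ! i, xs ! (Suc i mod length xs)) \<in> SR_pairs E \<eta>))"

text \<open>Finite-dimensional distributions of the Markov chain with kernel K:
  fdd K A j m s = probability, starting in s at time j, that s_j in A j, ..., s_(j+m) in A (j+m).\<close>
fun fdd :: "('s \<Rightarrow> 's measure) \<Rightarrow> (nat \<Rightarrow> 's set) \<Rightarrow> nat \<Rightarrow> nat \<Rightarrow> 's \<Rightarrow> real" where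
  "fdd K A j 0 s = indicator (A j) s"
| "fdd K A j (Suc m) s = indicator (A j) s * (\<integral>t. fdd K A (Suc j) m t \<partial>K s)"

definition markov_run_measure :: "'s measure \<Rightarrow> ('s \<Rightarrow> 's measure) \<Rightarrow> 's measure \<Rightarrow> 's stream measure \<Rightarrow> bool" where
  "markov_run_measure S K \<nu> P \<longleftrightarrow>
     prob_space P \<and> sets P = sets (stream_space S) \<and>
     (\<forall>m A. (\<forall>i. A i \<in> sets S) \<longrightarrow>
        measure P {\<omega> \<in> space P. \<forall>i\<le>m. \<omega> !! i \<in> A i} = (\<integral>s. fdd K A 0 m s \<partial>\<nu>))"

end

theory Submission
  imports Defs
begin

lemma comb:
  fixes f :: "nat \<Rightarrow> 'l::finite"
  assumes arcs: "\<forall>k. arcR (f k) (f (Suc k))"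
    and cyc: "\<forall>xs. xs \<noteq> [] \<and> (\<forall>i<length xs. arcR (xs!i) (xs!(Suc i mod length xs))) \<longrightarrow>
        (\<exists>i<length xs. (xs!i, xs!(Suc i mod length xs)) \<in> S)"
  shows "\<exists>(l,l')\<in>S. INFM k. f k = l \<and> f (Suc k) = l'"
proof (rule ccontr)
  assume "\<not> ?thesis"
  then have "\<forall>p\<in>S. MOST k. (f k, f (Suc k)) \<noteq> p" by auto
  then have "MOST k. \<forall>p\<in>S. (f k, f (Suc k)) \<noteq> p"
    by (intro eventually_ball_finite) auto
  then obtain T where T: "\<And>k. k \<ge> T \<Longrightarrow> (f k, f (Suc k)) \<notin> S"
    by (auto simp: MOST_nat_le)
  have "\<not> inj_on f {T..T+CARD('l)}"
  proof
    assume "inj_on f {T..T+CARD('l)}"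
    then have "card (f ` {T..T+CARD('l)}) = CARD('l) + 1" by (simp add: card_image)
    moreover have "card (f ` {T..T+CARD('l)}) \<le> CARD('l)" by (rule card_mono) auto
    ultimately show False by simp
  qed
  then obtain i j where ij: "T \<le> i" "i < j" "f i = f j"
    unfolding inj_on_def by (metis atLeastAtMost_iff linorder_neqE_nat)
  define xs where "xs = map f [i..<j]"
  have len: "length xs = j - i" by (simp add: xs_def)
  have nth: "\<And>d. d < j - i \<Longrightarrow> xs ! d = f (i + d)" by (simp add: xs_def)
  have nxt: "\<And>d. d < j - i \<Longrightarrow> xs ! (Suc d mod length xs) = f (i + Suc d)"
  proof -
    fix d assume d: "d < j - i"
    show "xs ! (Suc d mod length xs) = f (i + Suc d)"
    proof (cases "Suc d < j - i")
      case True then show ?thesis using nth len by simp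
    next
      case False
      then have "Suc d = j - i" using d by simp
      then show ?thesis using nth[of 0] len ij by simp
    qed
  qed
  have "xs \<noteq> [] \<and> (\<forall>d<length xs. arcR (xs!d) (xs!(Suc d mod length xs)))"
    using len nth nxt arcs ij by (auto simp del: add_Suc_right) (metis add_Suc_right)
  then obtain d where d: "d < length xs" "(xs!d, xs!(Suc d mod length xs)) \<in> S"
    using cyc by blast
  then have "(f (i+d), f (Suc (i+d))) \<in> S" using nth nxt len by auto
  with T[of "i+d"] ij show False by simp
qed

lemma meas:
  fixes S :: "('l::finite \<times> 'l) set"
  shows "{\<omega> \<in> space (stream_space (state_measure :: ('l,'n::finite) state measure)). \<exists>(l, l') \<in> S.
            INFM k. fst (\<omega> !! k) = l \<and> fst (\<omega> !! Suc k) = l'} \<in> sets (stream_space state_measure)"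
proof -
  have f: "\<And>k. (\<lambda>\<omega>. fst (\<omega> !! k)) \<in> stream_space (state_measure :: ('l,'n::finite) state measure) \<rightarrow>\<^sub>M count_space UNIV"
    unfolding state_measure_def by measurable
  show ?thesis
    unfolding INFM_nat_le using f
    by measurable
qed
theorem mainTheorem10:
  fixes E :: "('l::finite, 'a) edge set"
    and \<gamma> :: "'l \<Rightarrow> real ^ 'n::finite \<Rightarrow> real \<Rightarrow> real ^ 'n"
    and G :: "('l, 'a) edge \<Rightarrow> (real ^ 'n) set"
    and R :: "('l, 'a) edge \<Rightarrow> real ^ 'n \<Rightarrow> (real ^ 'n) set"
    and \<mu> :: "('l, 'n) state \<Rightarrow> real measure"
    and w :: "('l, 'n) state \<Rightarrow> ('l, 'a) edge \<Rightarrow> real"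
    and \<eta> :: "('l, 'a) edge \<Rightarrow> real ^ 'n \<Rightarrow> (real ^ 'n) measure"
    and K :: "('l, 'n) state \<Rightarrow> ('l, 'n) state measure"
    and \<nu> :: "('l, 'n) state measure"
    and P :: "('l, 'n) state stream measure"
  assumes shs: "is_SHS E \<gamma> G R \<mu> w \<eta>"
    and cyc: "cycle_reset E \<eta>"
    and K_kernel: "K \<in> state_measure \<rightarrow>\<^sub>M prob_algebra state_measure"
    and K_eq: "\<And>s l' D. D \<in> sets borel \<Longrightarrow>
                  measure (K s) ({l'} \<times> D) = shs_kernel_val E \<gamma> \<mu> w \<eta> s l' D"
    and nu: "prob_space \<nu>" "sets \<nu> = sets state_measure"
    and P: "markov_run_measure state_measure K \<nu> P"
  shows "measure P {\<omega> \<in> space P. \<exists>(l, l') \<in> SR_pairs E \<eta>.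
            INFM k. fst (\<omega> !! k) = l \<and> fst (\<omega> !! Suc k) = l'} = 1"
  proof -
  have spS: "space (state_measure :: ('l,'n) state measure) = UNIV"
    by (simp add: state_measure_def space_pair_measure)
  have Ks: "prob_space (K s) \<and> sets (K s) = sets state_measure" for s
  proof -
    have "K s \<in> space (prob_algebra state_measure)"
      using measurable_space[OF K_kernel, of s] spS by simp
    then show ?thesis by (auto simp: space_prob_algebra)
  qed
  have spK: "space (K s) = UNIV" for s
    using Ks[of s] spS sets_eq_imp_space_eq by metis
  have PP: "prob_space P" and sP: "sets P = sets (stream_space state_measure)"
    and mP: "\<And>m A. (\<forall>i. A i \<in> sets state_measure) \<Longrightarrow>
        measure P {\<omega> \<in> space P. \<forall>i\<le>m. \<omega> !! i \<in> A i} = (\<integral>s. fdd K A 0 m s \<partial>\<nu>)"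
    using P unfolding markov_run_measure_def by auto
  have spP: "space P = space (stream_space state_measure)"
    using sP sets_eq_imp_space_eq by blast
  have rect: "{l} \<times> UNIV \<in> sets state_measure" for l :: 'l
    unfolding state_measure_def by (rule pair_measureI) auto
  have step: "AE \<omega> in P. \<not> (fst (\<omega> !! k) = l \<and> fst (\<omega> !! Suc k) = l')"
    if na: "\<not> loc_arc E l l'" for k l l'
  proof -
    define A where "A i = (if i = k then {l} \<times> UNIV else if i = Suc k then {l'} \<times> UNIV
       else (UNIV :: ('l,'n) state set))" for i
    have Ameas: "\<forall>i. A i \<in> sets state_measure"
      using rect spS by (auto simp: A_def) (metis sets.top)
    have f0: "fdd K A j 0 = indicator (A j)" for j by (rule ext) simp
    have base: "fdd K A k (Suc 0) s = 0" for s
    proof (cases "fst s = l")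
      case True
      have "fdd K A k (Suc 0) s = indicator (A k) s * measure (K s) ({l'} \<times> UNIV)"
        by (simp add: f0) (simp add: A_def spK)
      also have "measure (K s) ({l'} \<times> UNIV) = shs_kernel_val E \<gamma> \<mu> w \<eta> s l' UNIV"
        by (rule K_eq) simp
      also have "\<dots> = 0"
      proof -
        have "{e \<in> E. src e = fst s \<and> tgt e = l'} = {}"
          using na True unfolding loc_arc_def by auto
        then show ?thesis unfolding shs_kernel_val_def by (simp only: sum.empty) simp
      qed
      finally show ?thesis by simp
    next
      case False then show ?thesis by (auto simp add: A_def indicator_def)
    qed
    have gen: "\<forall>j s. j + m = Suc k \<and> j \<le> k \<longrightarrow> fdd K A j m s = 0" for m
    proof (induction m)
      case 0 then show ?case by auto
    next
      case (Suc m)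
      show ?case
      proof (intro allI impI)
        fix j s assume h: "j + Suc m = Suc k \<and> j \<le> k"
        show "fdd K A j (Suc m) s = 0"
        proof (cases "j = k")
          case True then show ?thesis using h base by simp
        next
          case False
          then have "\<forall>t. fdd K A (Suc j) m t = 0" using Suc.IH h by auto
          then have "fdd K A (Suc j) m = (\<lambda>_. 0)" by (intro ext) blast
          then show ?thesis by simp
        qed
      qed
    qed
    have "measure P {\<omega> \<in> space P. \<forall>i\<le>Suc k. \<omega> !! i \<in> A i} = 0"
    proof -
      have "fdd K A 0 (Suc k) = (\<lambda>_. 0)" using gen[of "Suc k"] by (intro ext) (simp del: fdd.simps, metis prod.collapse)
      then show ?thesis using mP[OF Ameas, of "Suc k"] by simp
    qed
    moreover have eqs: "{\<omega> \<in> space P. \<forall>i\<le>Suc k. \<omega> !! i \<in> A i}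
        = {\<omega> \<in> space P. \<not> \<not> (fst (\<omega> !! k) = l \<and> fst (\<omega> !! Suc k) = l')}"
    proof (rule Collect_cong, rule conj_cong[OF refl])
      fix \<omega> :: "('l,'n) state stream"
      show "(\<forall>i\<le>Suc k. \<omega> !! i \<in> A i) = (\<not> \<not> (fst (\<omega> !! k) = l \<and> fst (\<omega> !! Suc k) = l'))"
      proof
        assume h: "\<forall>i\<le>Suc k. \<omega> !! i \<in> A i"
        from h[rule_format, of k] h[rule_format, of "Suc k"]
        show "\<not> \<not> (fst (\<omega> !! k) = l \<and> fst (\<omega> !! Suc k) = l')"
          by (simp add: A_def mem_Times_iff)
      next
        assume "\<not> \<not> (fst (\<omega> !! k) = l \<and> fst (\<omega> !! Suc k) = l')"
        then show "\<forall>i\<le>Suc k. \<omega> !! i \<in> A i"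
          by (simp add: A_def mem_Times_iff)
      qed
    qed
    moreover have "{\<omega> \<in> space P. \<forall>i\<le>Suc k. \<omega> !! i \<in> A i} \<in> sets P"
    proof -
      have "(\<lambda>\<omega>. \<omega> !! i) \<in> stream_space state_measure \<rightarrow>\<^sub>M state_measure" for i
        by measurable
      then show ?thesis unfolding sP spP using Ameas by measurable
    qed
    ultimately show ?thesis
      using finite_measure.emeasure_eq_measure[OF prob_space.finite_measure[OF PP]]
      by (subst AE_iff_measurable[OF _ refl]) (auto simp: eqs[symmetric])
  qed
  have arcs: "AE \<omega> in P. \<forall>k. loc_arc E (fst (\<omega> !! k)) (fst (\<omega> !! Suc k))"
  proof (rule AE_all_countable[THEN iffD2], rule allI)
    fix k
    have "AE \<omega> in P. \<forall>p\<in>{p. \<not> loc_arc E (fst p) (snd p)}.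
            \<not> (fst (\<omega> !! k) = fst p \<and> fst (\<omega> !! Suc k) = snd p)"
      by (rule AE_finite_allI) (simp, use step in fastforce)
    then show "AE \<omega> in P. loc_arc E (fst (\<omega> !! k)) (fst (\<omega> !! Suc k))"
      by eventually_elim auto
  qed
  have "AE \<omega> in P. \<exists>(l, l') \<in> SR_pairs E \<eta>. INFM k. fst (\<omega> !! k) = l \<and> fst (\<omega> !! Suc k) = l'"
    using arcs
  proof eventually_elim
    case (elim \<omega>)
    show ?case
      by (rule comb[where arcR = "loc_arc E" and f = "\<lambda>k. fst (\<omega> !! k)"])
         (use elim cyc in \<open>auto simp: cycle_reset_def\<close>)
  qed
  moreover have "{\<omega> \<in> space P. \<exists>(l, l') \<in> SR_pairs E \<eta>.
            INFM k. fst (\<omega> !! k) = l \<and> fst (\<omega> !! Suc k) = l'} \<in> sets P"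
    using meas[of "SR_pairs E \<eta>"] sP spP by simp
  ultimately show ?thesis
    using prob_space.prob_Collect_eq_1[OF PP, of "\<lambda>\<omega>. \<exists>(l, l') \<in> SR_pairs E \<eta>.
            INFM k. fst (\<omega> !! k) = l \<and> fst (\<omega> !! Suc k) = l'"] by blast
qed

end
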